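(* Let $r>0$ and $p,q\in\mathbb{R}$, and for integers $n\ge2$ let $$S_{r,p,q}^{(n)}=\sum_{k=1}^{n-1}(n^r-k^r)^p\,k^q.$$ Then, as $n\to\infty$, $S_{r,p,q}^{(n)}$ is of the same order (bounded above and below by positive constant multiples) as $$\begin{cases} n^{rp+q+1}, & \min\{p,q\}>-1,\\ n^{rp+q+1}(1+\ln n), & \min\{p,q\}=-1,\\ n^{\max\{rp,\,(r-1)p+q\}}, & \min\{p,q\}<-1.\end{cases}$$ *)

theory Defs
  imports Complex_Main "HOL-Library.Landau_Symbols"
begin

definition S_sum :: "real \<Rightarrow> real \<Rightarrow> real \<Rightarrow> nat \<Rightarrow> real" where
  "S_sum r p q n = (\<Sum>k=1..n-1. (real n powr r - real k powr r) powr p * real k powr q)"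

definition S_rate :: "real \<Rightarrow> real \<Rightarrow> real \<Rightarrow> nat \<Rightarrow> real" where
  "S_rate r p q n =
     (if min p q > -1 then real n powr (r*p + q + 1)
      else if min p q = -1 then real n powr (r*p + q + 1) * (1 + ln (real n))
      else real n powr (max (r*p) ((r-1)*p + q)))"

end

theory Submission
  imports Defs
begin

definition sw :: "(nat \<Rightarrow> real) \<Rightarrow> (nat \<Rightarrow> real) \<Rightarrow> bool" where
  "sw f g \<longleftrightarrow> (\<exists>c C. 0 < c \<and> 0 < C \<and>
     eventually (\<lambda>n. 0 \<le> g n \<and> c * g n \<le> f n \<and> f n \<le> C * g n) at_top)"

lemma swI:
  assumes "0 < c" "0 < C" "eventually (\<lambda>n. 0 \<le> g n \<and> c * g n \<le> f n \<and> f n \<le> C * g n) at_top"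
  shows "sw f g"
  using assms unfolding sw_def by blast

lemma sw_theta:
  assumes "sw f g" shows "f \<in> \<Theta>(g)"
proof -
  obtain c C where cC: "0 < c" "0 < C"
    and ev: "eventually (\<lambda>n. 0 \<le> g n \<and> c * g n \<le> f n \<and> f n \<le> C * g n) at_top"
    using assms unfolding sw_def by blast
  show ?thesis
  proof (rule bigthetaI'[OF cC])
    show "eventually (\<lambda>x. c * norm (g x) \<le> norm (f x) \<and> norm (f x) \<le> C * norm (g x)) at_top"
      using ev
    proof (rule eventually_mono)
      fix n assume h: "0 \<le> g n \<and> c * g n \<le> f n \<and> f n \<le> C * g n"
      then have "0 \<le> f n" using cC by (meson mult_nonneg_nonneg less_imp_le order_trans)
      then show "c * norm (g n) \<le> norm (f n) \<and> norm (f n) \<le> C * norm (g n)" using h by simp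
    qed
  qed
qed

lemma sw_trans:
  assumes "sw f g" "sw g h" shows "sw f h"
proof -
  obtain c1 C1 where c1: "0 < c1" "0 < C1"
    and e1: "eventually (\<lambda>n. 0 \<le> g n \<and> c1 * g n \<le> f n \<and> f n \<le> C1 * g n) at_top"
    using assms(1) unfolding sw_def by blast
  obtain c2 C2 where c2: "0 < c2" "0 < C2"
    and e2: "eventually (\<lambda>n. 0 \<le> h n \<and> c2 * h n \<le> g n \<and> g n \<le> C2 * h n) at_top"
    using assms(2) unfolding sw_def by blast
  show ?thesis
  proof (rule swI[of "c1*c2" "C1*C2"])
    show "eventually (\<lambda>n. 0 \<le> h n \<and> c1 * c2 * h n \<le> f n \<and> f n \<le> C1 * C2 * h n) at_top"
      using eventually_conj[OF e1 e2]
    proof (rule eventually_mono)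
      fix n assume h: "(0 \<le> g n \<and> c1 * g n \<le> f n \<and> f n \<le> C1 * g n) \<and>
                       0 \<le> h n \<and> c2 * h n \<le> g n \<and> g n \<le> C2 * h n"
      have "c1 * (c2 * h n) \<le> c1 * g n" using h c1 by (intro mult_left_mono) auto
      moreover have "C1 * g n \<le> C1 * (C2 * h n)" using h c1 by (intro mult_left_mono) auto
      ultimately show "0 \<le> h n \<and> c1 * c2 * h n \<le> f n \<and> f n \<le> C1 * C2 * h n"
        using h by (simp add: mult.assoc)
    qed
  qed (use c1 c2 in auto)
qed

lemma sw_sym:
  assumes "sw f g" shows "sw g f"
proof -
  obtain c C where cC: "0 < c" "0 < C"
    and ev: "eventually (\<lambda>n. 0 \<le> g n \<and> c * g n \<le> f n \<and> f n \<le> C * g n) at_top"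
    using assms unfolding sw_def by blast
  show ?thesis
  proof (rule swI[of "1/C" "1/c"])
    show "eventually (\<lambda>n. 0 \<le> f n \<and> 1/C * f n \<le> g n \<and> g n \<le> 1/c * f n) at_top"
      using ev
    proof (rule eventually_mono)
      fix n assume h: "0 \<le> g n \<and> c * g n \<le> f n \<and> f n \<le> C * g n"
      then have "0 \<le> f n" using cC by (meson mult_nonneg_nonneg less_imp_le order_trans)
      then show "0 \<le> f n \<and> 1/C * f n \<le> g n \<and> g n \<le> 1/c * f n" using h cC
        by (auto simp: field_simps)
    qed
  qed (use cC in auto)
qed

lemma sw_add:
  assumes "sw f1 g1" "sw f2 g2" shows "sw (\<lambda>n. f1 n + f2 n) (\<lambda>n. g1 n + g2 n)"
proof -
  obtain c1 C1 where c1: "0 < c1" "0 < C1"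
    and e1: "eventually (\<lambda>n. 0 \<le> g1 n \<and> c1 * g1 n \<le> f1 n \<and> f1 n \<le> C1 * g1 n) at_top"
    using assms(1) unfolding sw_def by blast
  obtain c2 C2 where c2: "0 < c2" "0 < C2"
    and e2: "eventually (\<lambda>n. 0 \<le> g2 n \<and> c2 * g2 n \<le> f2 n \<and> f2 n \<le> C2 * g2 n) at_top"
    using assms(2) unfolding sw_def by blast
  show ?thesis
  proof (rule swI[of "min c1 c2" "max C1 C2"])
    show "eventually (\<lambda>n. 0 \<le> g1 n + g2 n \<and> min c1 c2 * (g1 n + g2 n) \<le> f1 n + f2 n
        \<and> f1 n + f2 n \<le> max C1 C2 * (g1 n + g2 n)) at_top"
      using eventually_conj[OF e1 e2]
    proof (rule eventually_mono)
      fix n assume h: "(0 \<le> g1 n \<and> c1 * g1 n \<le> f1 n \<and> f1 n \<le> C1 * g1 n) \<and>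
                       0 \<le> g2 n \<and> c2 * g2 n \<le> f2 n \<and> f2 n \<le> C2 * g2 n"
      have "min c1 c2 * g1 n \<le> c1 * g1 n" using h by (intro mult_right_mono) auto
      moreover have "min c1 c2 * g2 n \<le> c2 * g2 n" using h by (intro mult_right_mono) auto
      moreover have "C1 * g1 n \<le> max C1 C2 * g1 n" using h by (intro mult_right_mono) auto
      moreover have "C2 * g2 n \<le> max C1 C2 * g2 n" using h by (intro mult_right_mono) auto
      ultimately show "0 \<le> g1 n + g2 n \<and> min c1 c2 * (g1 n + g2 n) \<le> f1 n + f2 n
        \<and> f1 n + f2 n \<le> max C1 C2 * (g1 n + g2 n)"
        using h by (simp add: distrib_left)
    qed
  qed (use c1 c2 in auto)
qed

lemma sw_mult:
  assumes "sw f1 g1" "sw f2 g2" shows "sw (\<lambda>n. f1 n * f2 n) (\<lambda>n. g1 n * g2 n)"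
proof -
  obtain c1 C1 where c1: "0 < c1" "0 < C1"
    and e1: "eventually (\<lambda>n. 0 \<le> g1 n \<and> c1 * g1 n \<le> f1 n \<and> f1 n \<le> C1 * g1 n) at_top"
    using assms(1) unfolding sw_def by blast
  obtain c2 C2 where c2: "0 < c2" "0 < C2"
    and e2: "eventually (\<lambda>n. 0 \<le> g2 n \<and> c2 * g2 n \<le> f2 n \<and> f2 n \<le> C2 * g2 n) at_top"
    using assms(2) unfolding sw_def by blast
  show ?thesis
  proof (rule swI[of "c1 * c2" "C1 * C2"])
    show "eventually (\<lambda>n. 0 \<le> g1 n * g2 n \<and> c1 * c2 * (g1 n * g2 n) \<le> f1 n * f2 n
        \<and> f1 n * f2 n \<le> C1 * C2 * (g1 n * g2 n)) at_top"
      using eventually_conj[OF e1 e2]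
    proof (rule eventually_mono)
      fix n assume h: "(0 \<le> g1 n \<and> c1 * g1 n \<le> f1 n \<and> f1 n \<le> C1 * g1 n) \<and>
                       0 \<le> g2 n \<and> c2 * g2 n \<le> f2 n \<and> f2 n \<le> C2 * g2 n"
      have f1: "0 \<le> f1 n" using h c1 by (meson mult_nonneg_nonneg less_imp_le order_trans)
      have "0 \<le> f2 n" using h c2 by (meson mult_nonneg_nonneg less_imp_le order_trans)
      have "(c1 * g1 n) * (c2 * g2 n) \<le> f1 n * f2 n"
        using h c1 c2 f1 \<open>0 \<le> f2 n\<close> by (intro mult_mono) auto
      moreover have "f1 n * f2 n \<le> (C1 * g1 n) * (C2 * g2 n)"
        using h c1 c2 f1 \<open>0 \<le> f2 n\<close> by (intro mult_mono) auto
      ultimately show "0 \<le> g1 n * g2 n \<and> c1 * c2 * (g1 n * g2 n) \<le> f1 n * f2 n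
        \<and> f1 n * f2 n \<le> C1 * C2 * (g1 n * g2 n)"
        using h by (simp add: mult_ac)
    qed
  qed (use c1 c2 in auto)
qed

lemma sw_refl:
  assumes "eventually (\<lambda>n. 0 \<le> g n) at_top" shows "sw g g"
  by (rule swI[of 1 1]) (use assms in \<open>auto elim: eventually_mono\<close>)

lemma sw_cong:
  assumes "sw f g" "eventually (\<lambda>n. f n = f' n) at_top" "eventually (\<lambda>n. g n = g' n) at_top"
  shows "sw f' g'"
proof -
  obtain c C where cC: "0 < c" "0 < C"
    and ev: "eventually (\<lambda>n. 0 \<le> g n \<and> c * g n \<le> f n \<and> f n \<le> C * g n) at_top"
    using assms unfolding sw_def by blast
  show ?thesis
    by (rule swI[OF cC]) (use eventually_conj[OF ev eventually_conj[OF assms(2,3)]] in \<open>auto elim: eventually_mono\<close>)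
qed

lemma sw_dom:
  assumes "0 \<le> K" "eventually (\<lambda>n. 0 \<le> g1 n \<and> 0 \<le> g2 n \<and> g2 n \<le> K * g1 n) at_top"
  shows "sw (\<lambda>n. g1 n + g2 n) g1"
  by (rule swI[of 1 "1 + K"]) (use assms in \<open>auto elim!: eventually_mono simp: distrib_right\<close>)

lemma sw_dom':
  assumes "0 \<le> K" "eventually (\<lambda>n. 0 \<le> g1 n \<and> 0 \<le> g2 n \<and> g1 n \<le> K * g2 n) at_top"
  shows "sw (\<lambda>n. g1 n + g2 n) g2"
proof -
  have "eventually (\<lambda>n. 0 \<le> g2 n \<and> 0 \<le> g1 n \<and> g1 n \<le> K * g2 n) at_top"
    using assms(2) by (auto elim: eventually_mono)
  from sw_dom[OF assms(1) this] show ?thesis by (simp add: add.commute)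
qed



lemma mvt_powr:
  fixes x y a b :: real
  assumes "0 < x" "x < y"
  shows "\<exists>z. x < z \<and> z < y \<and> y powr b - x powr b = b * z powr (b - 1) * (y - x)"
proof -
  have "\<exists>z. x < z \<and> z < y \<and> (y powr b - x powr b = (y - x) * (b * z powr (b - 1)))"
    by (rule MVT2[OF assms(2)]) (use assms in \<open>auto intro!: has_real_derivative_powr\<close>)
  then show ?thesis by (auto simp: mult_ac)
qed

lemma mvt_le1:
  fixes x y a b :: real
  assumes "0 < x" "x < y" "0 \<le> a"
  shows "y powr (a+1) - x powr (a+1) \<le> (a+1) * y powr a * (y - x)"
proof -
  obtain z where z: "x < z" "z < y" "y powr (a+1) - x powr (a+1) = (a+1) * z powr a * (y - x)"
    using mvt_powr[OF assms(1,2), of "a+1"] by auto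
  have "z powr a \<le> y powr a" using z assms by (intro powr_mono2) auto
  then have "(a+1) * z powr a * (y - x) \<le> (a+1) * y powr a * (y - x)"
    using assms by (intro mult_right_mono mult_left_mono) auto
  then show ?thesis using z by simp
qed

lemma mvt_ge2:
  fixes x y a b :: real
  assumes "0 < x" "x < y" "a \<le> 0" "0 \<le> a + 1"
  shows "(a+1) * y powr a * (y - x) \<le> y powr (a+1) - x powr (a+1)"
proof -
  obtain z where z: "x < z" "z < y" "y powr (a+1) - x powr (a+1) = (a+1) * z powr a * (y - x)"
    using mvt_powr[OF assms(1,2), of "a+1"] by auto
  have "y powr a \<le> z powr a" using z assms by (intro powr_mono2') auto
  then have "(a+1) * y powr a * (y - x) \<le> (a+1) * z powr a * (y - x)"
    using assms by (intro mult_right_mono mult_left_mono) auto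
  then show ?thesis using z by simp
qed

lemma mvt_le3:
  fixes x y a b :: real
  assumes "0 < x" "x < y" "a + 1 \<le> 0"
  shows "y powr (a+1) - x powr (a+1) \<le> (a+1) * y powr a * (y - x)"
proof -
  obtain z where z: "x < z" "z < y" "y powr (a+1) - x powr (a+1) = (a+1) * z powr a * (y - x)"
    using mvt_powr[OF assms(1,2), of "a+1"] by auto
  have "y powr a \<le> z powr a" using z assms by (intro powr_mono2') auto
  then have "(-(a+1)) * y powr a * (y - x) \<le> (-(a+1)) * z powr a * (y - x)"
    using assms by (intro mult_right_mono mult_left_mono) auto
  then have "-((a+1) * y powr a * (y - x)) \<le> -((a+1) * z powr a * (y - x))"
    by (simp only: mult_minus_left)
  then show ?thesis using z by linarith
qed

definition P :: "real \<Rightarrow> nat \<Rightarrow> real" where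
  "P a m = (\<Sum>k=1..m. real k powr a)"

lemma P_0 [simp]: "P a 0 = 0" by (simp add: P_def)
lemma P_Suc: "P a (Suc m) = P a m + real (Suc m) powr a"
  by (simp add: P_def)

lemma P_nonneg: "0 \<le> P a m"
  unfolding P_def by (intro sum_nonneg) auto

lemma P_ge1: assumes "1 \<le> m" shows "1 \<le> P a m"
  using assms
proof (induction m rule: dec_induct)
  case base then show ?case by (simp add: P_def)
next
  case (step m) then show ?case by (simp add: P_Suc add_increasing2)
qed

lemma PA1: assumes "0 \<le> a" shows "real m powr (a+1) \<le> (a+1) * P a m"
proof (induction m)
  case 0 then show ?case by simp
next
  case (Suc m)
  have st: "real (Suc m) powr (a+1) - real m powr (a+1) \<le> (a+1) * real (Suc m) powr a"
  proof (cases "m = 0")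
    case True then show ?thesis using assms by simp
  next
    case False
    then show ?thesis using mvt_le1[of "real m" "real (Suc m)" a] assms by simp
  qed
  show ?case using Suc st by (simp add: P_Suc distrib_left)
qed

lemma PA2: assumes "0 \<le> a" shows "P a m \<le> real m powr (a+1)"
proof -
  have "P a m \<le> (\<Sum>k=1..m. real m powr a)"
    unfolding P_def by (intro sum_mono powr_mono2) (use assms in auto)
  also have "\<dots> = real m * real m powr a" by simp
  also have "\<dots> = real m powr (a+1)"
    by (cases "m = 0") (auto simp: powr_add)
  finally show ?thesis .
qed

lemma PB1: assumes "a \<le> 0" "0 \<le> a + 1" shows "(a+1) * P a m \<le> real m powr (a+1)"
proof (induction m)
  case 0 then show ?case by simp
next
  case (Suc m)
  have st: "(a+1) * real (Suc m) powr a \<le> real (Suc m) powr (a+1) - real m powr (a+1)"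
  proof (cases "m = 0")
    case True then show ?thesis using assms by simp
  next
    case False
    then show ?thesis using mvt_ge2[of "real m" "real (Suc m)" a] assms by simp
  qed
  show ?case using Suc st by (simp add: P_Suc distrib_left)
qed

lemma PB2: assumes "a \<le> 0" shows "real m powr (a+1) \<le> P a m"
proof -
  have "real m powr (a+1) = real m * real m powr a"
    by (cases "m = 0") (auto simp: powr_add)
  also have "\<dots> = (\<Sum>k=1..m. real m powr a)" by simp
  also have "\<dots> \<le> P a m"
    unfolding P_def by (intro sum_mono powr_mono2') (use assms in auto)
  finally show ?thesis .
qed

lemma PC1: assumes "a + 1 < 0" "1 \<le> m"
  shows "-(a+1) * P a m \<le> -(a+1) + 1 - real m powr (a+1)"
  using assms(2)
proof (induction m rule: dec_induct)
  case base then show ?case by (simp add: P_def)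
next
  case (step m)
  have "real (Suc m) powr (a+1) - real m powr (a+1) \<le> (a+1) * real (Suc m) powr a"
    using mvt_le3[of "real m" "real (Suc m)" a] assms step by simp
  then show ?case using step by (simp add: P_Suc algebra_simps)
qed

lemma PC: assumes "a + 1 < 0" "1 \<le> m"
  shows "P a m \<le> 1 + 1 / (-(a+1))"
proof -
  have "-(a+1) * P a m \<le> -(a+1) + 1" using PC1[OF assms] powr_ge_zero[of "real m" "a+1"] by linarith
  then show ?thesis using assms(1) by (simp add: field_simps)
qed

lemma inv_powr: "real k powr (-1) = 1 / real k"
  by (cases "k = 0") (auto simp: powr_minus_divide)

lemma PD1: assumes "1 \<le> m" shows "P (-1) m \<le> 1 + ln (real m)"
  using assms
proof (induction m rule: dec_induct)
  case base then show ?case by (simp add: P_def)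
next
  case (step m)
  have "ln (real m / real (Suc m)) \<le> real m / real (Suc m) - 1"
    using step by (intro ln_le_minus_one) auto
  also have "\<dots> = - (1 / real (Suc m))" by (simp add: field_simps)
  finally have "1 / real (Suc m) \<le> ln (real (Suc m)) - ln (real m)"
    using step by (simp add: ln_div)
  then show ?case using step by (simp add: P_Suc inv_powr)
qed

lemma PD2: shows "ln (real m + 1) \<le> P (-1) m"
proof (induction m)
  case 0 then show ?case by simp
next
  case (Suc m)
  have "ln ((real m + 2) / (real m + 1)) \<le> (real m + 2) / (real m + 1) - 1"
    by (intro ln_le_minus_one) auto
  also have "\<dots> = 1 / real (Suc m)" by (simp add: field_simps)
  finally have "ln (real m + 2) - ln (real m + 1) \<le> 1 / real (Suc m)"
    by (simp add: ln_div)
  then show ?case using Suc by (simp add: P_Suc inv_powr algebra_simps)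
qed



definition G :: "real \<Rightarrow> nat \<Rightarrow> real" where
  "G a n = (if a > -1 then real n powr (a+1) else if a = -1 then 1 + ln (real n) else 1)"

lemma ev_ln_ge: "eventually (\<lambda>n. K \<le> ln (real n)) at_top"
proof -
  have "filterlim (\<lambda>n. ln (real n)) at_top sequentially"
    by (rule filterlim_compose[OF ln_at_top filterlim_real_sequentially])
  then show ?thesis by (simp add: filterlim_at_top)
qed

lemma sw_P:
  assumes ev: "eventually (\<lambda>n. real n \<le> 4 * real (m n) \<and> m n \<le> n \<and> 1 \<le> m n) at_top"
  shows "sw (\<lambda>n. P a (m n)) (G a)"
proof (cases "a > -1")
  case True
  define b where "b = a + 1"
  have b: "0 < b" using True b_def by simp
  have s1: "sw (\<lambda>n. P a (m n)) (\<lambda>n. real (m n) powr b)"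
  proof (rule swI[of "min 1 (1/b)" "max 1 (1/b)"])
    show "eventually (\<lambda>n. 0 \<le> real (m n) powr b \<and> min 1 (1/b) * real (m n) powr b \<le> P a (m n)
       \<and> P a (m n) \<le> max 1 (1/b) * real (m n) powr b) at_top"
    proof (intro always_eventually allI)
      fix n
      define M where "M = real (m n) powr b"
      have M0: "0 \<le> M" unfolding M_def by simp
      have "min 1 (1/b) * M \<le> P a (m n) \<and> P a (m n) \<le> max 1 (1/b) * M"
      proof (cases "a \<ge> 0")
        case True
        have l: "M \<le> b * P a (m n)" using PA1[OF True, of "m n"] by (simp add: M_def b_def)
        have u: "P a (m n) \<le> M" using PA2[OF True, of "m n"] by (simp add: M_def b_def)
        have "min 1 (1/b) * M \<le> (1/b) * M" using M0 by (intro mult_right_mono) auto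
        also have "\<dots> \<le> P a (m n)" using l b by (simp add: field_simps)
        finally have "min 1 (1/b) * M \<le> P a (m n)" .
        moreover have "M \<le> max 1 (1/b) * M" using M0 by (simp add: mult_le_cancel_right1)
        ultimately show ?thesis using u by linarith
      next
        case False
        have u: "b * P a (m n) \<le> M" using PB1[of a "m n"] False True by (simp add: M_def b_def)
        have l: "M \<le> P a (m n)" using PB2[of a "m n"] False by (simp add: M_def b_def)
        have "P a (m n) \<le> (1/b) * M" using u b by (simp add: field_simps)
        also have "\<dots> \<le> max 1 (1/b) * M" using M0 by (intro mult_right_mono) auto
        finally have "P a (m n) \<le> max 1 (1/b) * M" .
        moreover have "min 1 (1/b) * M \<le> M" using M0 mult_right_mono[of "min 1 (1/b)" 1 M] by simp
        ultimately show ?thesis using l by linarith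
      qed
      then show "0 \<le> real (m n) powr b \<and> min 1 (1/b) * real (m n) powr b \<le> P a (m n)
         \<and> P a (m n) \<le> max 1 (1/b) * real (m n) powr b" using M0 by (simp add: M_def)
    qed
  qed (use b in auto)
  have s2: "sw (\<lambda>n. real (m n) powr b) (G a)"
  proof (rule swI[of "1 / 4 powr b" 1])
    show "eventually (\<lambda>n. 0 \<le> G a n \<and> 1 / 4 powr b * G a n \<le> real (m n) powr b
       \<and> real (m n) powr b \<le> 1 * G a n) at_top"
      using ev
    proof (rule eventually_mono)
      fix n assume h: "real n \<le> 4 * real (m n) \<and> m n \<le> n \<and> 1 \<le> m n"
      have G: "G a n = real n powr b" using True by (simp add: G_def b_def)
      have "1 / 4 powr b * real n powr b = (real n / 4) powr b" by (simp add: powr_divide)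
      also have "\<dots> \<le> real (m n) powr b" using h b by (intro powr_mono2) auto
      finally have 1: "1 / 4 powr b * real n powr b \<le> real (m n) powr b" .
      have 2: "real (m n) powr b \<le> real n powr b" using h b by (intro powr_mono2) auto
      show "0 \<le> G a n \<and> 1 / 4 powr b * G a n \<le> real (m n) powr b
       \<and> real (m n) powr b \<le> 1 * G a n" using 1 2 G by simp
    qed
  qed auto
  show ?thesis by (rule sw_trans[OF s1 s2])
next
  case False
  show ?thesis
  proof (cases "a = -1")
    case True
    show ?thesis
    proof (rule swI[of "1/2" 1])
      show "eventually (\<lambda>n. 0 \<le> G a n \<and> 1/2 * G a n \<le> P a (m n) \<and> P a (m n) \<le> 1 * G a n) at_top"
        using eventually_conj[OF ev ev_ln_ge[of "1 + 2 * ln 4"]]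
      proof (rule eventually_mono)
        fix n assume h: "(real n \<le> 4 * real (m n) \<and> m n \<le> n \<and> 1 \<le> m n) \<and> 1 + 2 * ln 4 \<le> ln (real n)"
        have G: "G a n = 1 + ln (real n)" using True by (simp add: G_def)
        have n1: "1 \<le> real n" using h by linarith
        have u: "P a (m n) \<le> 1 + ln (real (m n))" using PD1[of "m n"] h True by simp
        have "ln (real (m n)) \<le> ln (real n)" using h by (subst ln_le_cancel_iff) auto
        with u have u': "P a (m n) \<le> 1 + ln (real n)" by linarith
        have "ln (real n / 4) \<le> ln (real (m n) + 1)" using h n1 by (subst ln_le_cancel_iff) auto
        then have "ln (real n) - ln 4 \<le> P a (m n)" using PD2[of "m n"] True n1
          by (simp add: ln_div)
        moreover have "1 + ln (real n) \<le> 2 * (ln (real n) - ln 4)" using conjunct2[OF h] by simp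
        ultimately have l: "1/2 * (1 + ln (real n)) \<le> P a (m n)" by argo
        have "0 \<le> ln (real n)" using n1 by simp
        then show "0 \<le> G a n \<and> 1/2 * G a n \<le> P a (m n) \<and> P a (m n) \<le> 1 * G a n"
          using G l u' by simp
      qed
    qed auto
  next
    case False2: False
    have a: "a + 1 < 0" using False False2 by linarith
    show ?thesis
    proof (rule swI[of 1 "1 + 1 / (-(a+1))"])
      show "eventually (\<lambda>n. 0 \<le> G a n \<and> 1 * G a n \<le> P a (m n) \<and> P a (m n) \<le> (1 + 1 / (-(a+1))) * G a n) at_top"
        using ev
      proof (rule eventually_mono)
        fix n assume h: "real n \<le> 4 * real (m n) \<and> m n \<le> n \<and> 1 \<le> m n"
        have G: "G a n = 1" using False False2 by (simp add: G_def)
        show "0 \<le> G a n \<and> 1 * G a n \<le> P a (m n) \<and> P a (m n) \<le> (1 + 1 / (-(a+1))) * G a n"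
          using G P_ge1[of "m n" a] PC[OF a, of "m n"] h by simp
      qed
    qed (use a in \<open>auto simp: field_simps\<close>)
  qed
qed



lemma ratio_bound:
  fixes t al e :: real
  assumes "0 < al" "al \<le> t" "t \<le> 1"
  shows "al powr \<bar>e\<bar> \<le> t powr e \<and> t powr e \<le> al powr (-\<bar>e\<bar>)"
proof (cases "e \<ge> 0")
  case True
  have 1: "al powr e \<le> t powr e" using assms True by (intro powr_mono2) auto
  have "t powr e \<le> 1" using assms True by (intro powr_le1) auto
  moreover have "al powr e \<le> 1" using assms True by (intro powr_le1) auto
  then have "1 \<le> al powr (-e)" using assms by (simp add: powr_minus_divide)
  ultimately show ?thesis using 1 True by simp
next
  case False
  have 1: "t powr e \<le> al powr e" using assms False by (intro powr_mono2') auto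
  have "1 powr e \<le> t powr e" using assms False by (intro powr_mono2') auto
  moreover have "al powr (-e) \<le> 1" using assms False by (intro powr_le1) auto
  ultimately show ?thesis using 1 False by simp
qed

lemma rel_bound:
  fixes x y al e :: real
  assumes "0 < y" "0 < al" "al * y \<le> x" "x \<le> y"
  shows "al powr \<bar>e\<bar> * y powr e \<le> x powr e \<and> x powr e \<le> al powr (-\<bar>e\<bar>) * y powr e"
proof -
  have t: "al \<le> x / y" "x / y \<le> 1" using assms by (auto simp: field_simps)
  have x: "x = y * (x / y)" using assms by simp
  have "y powr e * (x / y) powr e = (y * (x / y)) powr e" by (rule powr_mult[symmetric])
  then have "x powr e = y powr e * (x / y) powr e" using assms by simp
  moreover note ratio_bound[OF assms(2) t, of e]
  moreover have "0 \<le> y powr e" by simp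
  ultimately show ?thesis
    by (auto simp: mult.commute intro: mult_left_mono)
qed

lemma prod_bounds:
  fixes a b c d x y :: real
  assumes "0 \<le> a" "a \<le> x" "x \<le> b" "0 \<le> c" "c \<le> y" "y \<le> d"
  shows "a * c \<le> x * y \<and> x * y \<le> b * d"
proof
  show "a * c \<le> x * y" using assms by (intro mult_mono) auto
  show "x * y \<le> b * d" using assms by (intro mult_mono) auto
qed

lemma ptA:
  fixes r p q :: real and n k :: nat
  assumes r: "0 < r" and k: "1 \<le> k" "2 * k \<le> n"
  defines "al \<equiv> 1 - (1/2) powr r"
  shows "al powr \<bar>p\<bar> * (real n powr (r*p) * real k powr q)
           \<le> (real n powr r - real k powr r) powr p * real k powr q
       \<and> (real n powr r - real k powr r) powr p * real k powr q
           \<le> al powr (-\<bar>p\<bar>) * (real n powr (r*p) * real k powr q)"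
proof -
  define N where "N = real n"
  define K where "K = real k"
  have N: "0 < N" using k by (simp add: N_def)
  have K: "0 < K" using k by (simp add: K_def)
  have KN: "K / N \<le> 1/2" using k N by (simp add: N_def K_def field_simps)
  have "(1/2::real) powr r < 1 powr r" using r by (intro powr_less_mono2) auto
  then have al0: "0 < al" by (simp add: al_def)
  define t where "t = 1 - (K / N) powr r"
  have "(K / N) powr r \<le> (1/2) powr r" using KN K N r by (intro powr_mono2) auto
  then have t1: "al \<le> t" by (simp add: al_def t_def)
  have t2: "t \<le> 1" by (simp add: t_def)
  have "N powr r - K powr r = N powr r * t"
    using N by (simp add: t_def powr_divide right_diff_distrib)
  then have eq: "(N powr r - K powr r) powr p = N powr (r*p) * t powr p"
    by (simp add: powr_mult powr_powr)
  have b: "al powr \<bar>p\<bar> \<le> t powr p \<and> t powr p \<le> al powr (-\<bar>p\<bar>)"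
    by (rule ratio_bound[OF al0 t1 t2])
  have nn: "0 \<le> N powr (r*p) * K powr q" by simp
  have "al powr \<bar>p\<bar> * (N powr (r*p) * K powr q) \<le> t powr p * (N powr (r*p) * K powr q)"
    using b nn by (intro mult_right_mono) auto
  moreover have "t powr p * (N powr (r*p) * K powr q) \<le> al powr (-\<bar>p\<bar>) * (N powr (r*p) * K powr q)"
    using b nn by (intro mult_right_mono) auto
  ultimately show ?thesis unfolding N_def[symmetric] K_def[symmetric] eq
    by (simp add: mult_ac)
qed

lemma ptB:
  fixes r p q :: real and n j :: nat
  assumes r: "0 < r" and j: "1 \<le> j" "2 * j < n"
  defines "cB \<equiv> r powr p * ((1/2) powr \<bar>(r-1)*p\<bar> * (1/2) powr \<bar>q\<bar>)"
  defines "CB \<equiv> r powr p * ((1/2) powr (-\<bar>(r-1)*p\<bar>) * (1/2) powr (-\<bar>q\<bar>))"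
  shows "cB * (real n powr ((r-1)*p+q) * real j powr p)
           \<le> (real n powr r - real (n-j) powr r) powr p * real (n-j) powr q
       \<and> (real n powr r - real (n-j) powr r) powr p * real (n-j) powr q
           \<le> CB * (real n powr ((r-1)*p+q) * real j powr p)"
proof -
  define N where "N = real n"
  define K where "K = real (n-j)"
  define J where "J = real j"
  have KJ: "K = N - J" using j by (simp add: K_def N_def J_def of_nat_diff)
  have J: "1 \<le> J" using j by (simp add: J_def)
  have N: "0 < N" using j by (simp add: N_def)
  have K2: "1/2 * N \<le> K" using j by (simp add: KJ N_def J_def)
  have K0: "0 < K" using K2 N by simp
  have KN: "K < N" using KJ J by simp
  obtain z where z: "K < z" "z < N" "N powr r - K powr r = r * z powr (r - 1) * (N - K)"
    using mvt_powr[OF K0 KN, of r] by auto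
  have eq: "(N powr r - K powr r) powr p = r powr p * (z powr ((r-1)*p) * J powr p)"
    using z KJ by (simp add: powr_mult powr_powr mult_ac)
  have bz: "(1/2) powr \<bar>(r-1)*p\<bar> * N powr ((r-1)*p) \<le> z powr ((r-1)*p)
      \<and> z powr ((r-1)*p) \<le> (1/2) powr (-\<bar>(r-1)*p\<bar>) * N powr ((r-1)*p)"
    using z K2 N by (intro rel_bound) auto
  have bk: "(1/2) powr \<bar>q\<bar> * N powr q \<le> K powr q
      \<and> K powr q \<le> (1/2) powr (-\<bar>q\<bar>) * N powr q"
    using K2 KN N by (intro rel_bound) auto
  have pb: "((1/2) powr \<bar>(r-1)*p\<bar> * N powr ((r-1)*p)) * ((1/2) powr \<bar>q\<bar> * N powr q)
      \<le> z powr ((r-1)*p) * K powr q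
     \<and> z powr ((r-1)*p) * K powr q
      \<le> ((1/2) powr (-\<bar>(r-1)*p\<bar>) * N powr ((r-1)*p)) * ((1/2) powr (-\<bar>q\<bar>) * N powr q)"
    using bz bk by (intro prod_bounds) auto
  have NN: "N powr ((r-1)*p) * N powr q = N powr ((r-1)*p+q)" by (simp add: powr_add)
  have c0: "0 \<le> r powr p * J powr p" by simp
  have lo: "cB * (N powr ((r-1)*p+q) * J powr p) = (r powr p * J powr p) *
      (((1/2) powr \<bar>(r-1)*p\<bar> * N powr ((r-1)*p)) * ((1/2) powr \<bar>q\<bar> * N powr q))"
    unfolding cB_def NN[symmetric] by (simp add: mult_ac)
  have hi: "CB * (N powr ((r-1)*p+q) * J powr p) = (r powr p * J powr p) *
      (((1/2) powr (-\<bar>(r-1)*p\<bar>) * N powr ((r-1)*p)) * ((1/2) powr (-\<bar>q\<bar>) * N powr q))"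
    unfolding CB_def NN[symmetric] by (simp add: mult_ac)
  have mid: "(N powr r - K powr r) powr p * K powr q = (r powr p * J powr p) * (z powr ((r-1)*p) * K powr q)"
    unfolding eq by (simp add: mult_ac)
  show ?thesis
    unfolding N_def[symmetric] K_def[symmetric] J_def[symmetric] lo hi mid
    using pb c0 by (auto intro: mult_left_mono)
qed



definition F :: "real \<Rightarrow> real \<Rightarrow> real \<Rightarrow> nat \<Rightarrow> nat \<Rightarrow> real" where
  "F r p q n k = (real n powr r - real k powr r) powr p * real k powr q"

lemma S_split:
  assumes "2 \<le> n"
  shows "S_sum r p q n = (\<Sum>k=1..n div 2. F r p q n k) + (\<Sum>j=1..n-1-n div 2. F r p q n (n-j))"
proof -
  have U: "{1..n-1} = {1..n div 2} \<union> {n div 2 + 1..n-1}" using assms by auto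
  have "S_sum r p q n = (\<Sum>k\<in>{1..n div 2} \<union> {n div 2 + 1..n-1}. F r p q n k)"
    unfolding S_sum_def F_def U[symmetric] by simp
  also have "\<dots> = (\<Sum>k=1..n div 2. F r p q n k) + (\<Sum>k=n div 2 + 1..n-1. F r p q n k)"
    by (rule sum.union_disjoint) auto
  also have "(\<Sum>k=n div 2 + 1..n-1. F r p q n k) = (\<Sum>j=1..n-1-n div 2. F r p q n (n-j))"
    by (rule sum.reindex_bij_witness[of _ "\<lambda>j. n - j" "\<lambda>k. n - k"]) auto
  finally show ?thesis .
qed

lemma sw_partA:
  assumes r: "0 < r"
  shows "sw (\<lambda>n. \<Sum>k=1..n div 2. F r p q n k) (\<lambda>n. real n powr (r*p) * P q (n div 2))"
proof -
  define al where "al = 1 - (1/2::real) powr r"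
  have "(1/2::real) powr r < 1 powr r" using r by (intro powr_less_mono2) auto
  then have al0: "0 < al" by (simp add: al_def)
  show ?thesis
  proof (rule swI[of "al powr \<bar>p\<bar>" "al powr (-\<bar>p\<bar>)"])
    show "eventually (\<lambda>n. 0 \<le> real n powr (r*p) * P q (n div 2)
       \<and> al powr \<bar>p\<bar> * (real n powr (r*p) * P q (n div 2)) \<le> (\<Sum>k=1..n div 2. F r p q n k)
       \<and> (\<Sum>k=1..n div 2. F r p q n k) \<le> al powr (-\<bar>p\<bar>) * (real n powr (r*p) * P q (n div 2))) at_top"
    proof (intro always_eventually allI conjI)
      fix n :: nat
      show "0 \<le> real n powr (r*p) * P q (n div 2)" using P_nonneg by simp
      have e: "(\<Sum>k=1..n div 2. c * (real n powr (r*p) * real k powr q)) = c * (real n powr (r*p) * P q (n div 2))" for c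
        by (simp add: P_def sum_distrib_left)
      have "(\<Sum>k=1..n div 2. al powr \<bar>p\<bar> * (real n powr (r*p) * real k powr q)) \<le> (\<Sum>k=1..n div 2. F r p q n k)"
        by (intro sum_mono) (use ptA[OF r] in \<open>auto simp: F_def al_def\<close>)
      then show "al powr \<bar>p\<bar> * (real n powr (r*p) * P q (n div 2)) \<le> (\<Sum>k=1..n div 2. F r p q n k)"
        by (simp only: e)
      have "(\<Sum>k=1..n div 2. F r p q n k) \<le> (\<Sum>k=1..n div 2. al powr (-\<bar>p\<bar>) * (real n powr (r*p) * real k powr q))"
        by (intro sum_mono) (use ptA[OF r] in \<open>auto simp: F_def al_def\<close>)
      then show "(\<Sum>k=1..n div 2. F r p q n k) \<le> al powr (-\<bar>p\<bar>) * (real n powr (r*p) * P q (n div 2))"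
        by (simp only: e)
    qed
  qed (use al0 in auto)
qed

lemma sw_partB:
  assumes r: "0 < r"
  shows "sw (\<lambda>n. \<Sum>j=1..n-1-n div 2. F r p q n (n-j)) (\<lambda>n. real n powr ((r-1)*p+q) * P p (n-1-n div 2))"
proof -
  define cB where "cB = r powr p * ((1/2) powr \<bar>(r-1)*p\<bar> * (1/2) powr \<bar>q\<bar>)"
  define CB where "CB = r powr p * ((1/2) powr (-\<bar>(r-1)*p\<bar>) * (1/2) powr (-\<bar>q\<bar>))"
  show ?thesis
  proof (rule swI[of cB CB])
    show "eventually (\<lambda>n. 0 \<le> real n powr ((r-1)*p+q) * P p (n-1-n div 2)
       \<and> cB * (real n powr ((r-1)*p+q) * P p (n-1-n div 2)) \<le> (\<Sum>j=1..n-1-n div 2. F r p q n (n-j))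
       \<and> (\<Sum>j=1..n-1-n div 2. F r p q n (n-j)) \<le> CB * (real n powr ((r-1)*p+q) * P p (n-1-n div 2))) at_top"
    proof (intro always_eventually allI conjI)
      fix n :: nat
      show "0 \<le> real n powr ((r-1)*p+q) * P p (n-1-n div 2)" using P_nonneg by simp
      have e: "(\<Sum>j=1..n-1-n div 2. c * (real n powr ((r-1)*p+q) * real j powr p)) = c * (real n powr ((r-1)*p+q) * P p (n-1-n div 2))" for c
        by (simp add: P_def sum_distrib_left)
      have jn: "2 * j < n" if "j \<in> {1..n-1-n div 2}" for j using that by auto
      have "(\<Sum>j=1..n-1-n div 2. cB * (real n powr ((r-1)*p+q) * real j powr p)) \<le> (\<Sum>j=1..n-1-n div 2. F r p q n (n-j))"
        by (intro sum_mono) (use ptB[OF r] jn in \<open>auto simp: F_def cB_def\<close>)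
      then show "cB * (real n powr ((r-1)*p+q) * P p (n-1-n div 2)) \<le> (\<Sum>j=1..n-1-n div 2. F r p q n (n-j))"
        by (simp only: e)
      have "(\<Sum>j=1..n-1-n div 2. F r p q n (n-j)) \<le> (\<Sum>j=1..n-1-n div 2. CB * (real n powr ((r-1)*p+q) * real j powr p))"
        by (intro sum_mono) (use ptB[OF r] jn in \<open>auto simp: F_def CB_def\<close>)
      then show "(\<Sum>j=1..n-1-n div 2. F r p q n (n-j)) \<le> CB * (real n powr ((r-1)*p+q) * P p (n-1-n div 2))"
        by (simp only: e)
    qed
  qed (use r in \<open>auto simp: cB_def CB_def\<close>)
qed

definition E :: "real \<Rightarrow> real \<Rightarrow> real \<Rightarrow> nat \<Rightarrow> real" where
  "E r p q n = real n powr (r*p) * G q n + real n powr ((r-1)*p+q) * G p n"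

lemma sw_SE:
  assumes r: "0 < r"
  shows "sw (S_sum r p q) (E r p q)"
proof -
  have ev: "eventually (\<lambda>n. (\<Sum>k=1..n div 2. F r p q n k) + (\<Sum>j=1..n-1-n div 2. F r p q n (n-j)) = S_sum r p q n) at_top"
    by (rule eventually_mono[OF eventually_ge_at_top[of 2]]) (rule S_split[symmetric])
  have s1: "sw (S_sum r p q) (\<lambda>n. real n powr (r*p) * P q (n div 2) + real n powr ((r-1)*p+q) * P p (n-1-n div 2))"
    by (rule sw_cong[OF sw_add[OF sw_partA[OF r, of p q] sw_partB[OF r, of p q]] ev]) simp
  have m1: "eventually (\<lambda>n. real n \<le> 4 * real (n div 2) \<and> n div 2 \<le> n \<and> 1 \<le> n div 2) at_top"
  proof (rule eventually_mono[OF eventually_ge_at_top[of 2]])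
    fix n :: nat assume "2 \<le> n"
    then have "n \<le> 4 * (n div 2) \<and> n div 2 \<le> n \<and> 1 \<le> n div 2" by auto
    then show "real n \<le> 4 * real (n div 2) \<and> n div 2 \<le> n \<and> 1 \<le> n div 2"
      by (metis of_nat_le_iff of_nat_mult of_nat_numeral)
  qed
  have m2: "eventually (\<lambda>n. real n \<le> 4 * real (n-1-n div 2) \<and> n-1-n div 2 \<le> n \<and> 1 \<le> n-1-n div 2) at_top"
  proof (rule eventually_mono[OF eventually_ge_at_top[of 4]])
    fix n :: nat assume "4 \<le> n"
    then have "n \<le> 4 * (n-1-n div 2) \<and> n-1-n div 2 \<le> n \<and> 1 \<le> n-1-n div 2" by auto
    then show "real n \<le> 4 * real (n-1-n div 2) \<and> n-1-n div 2 \<le> n \<and> 1 \<le> n-1-n div 2"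
      by (metis of_nat_le_iff of_nat_mult of_nat_numeral)
  qed
  have s2: "sw (\<lambda>n. real n powr (r*p) * P q (n div 2) + real n powr ((r-1)*p+q) * P p (n-1-n div 2)) (E r p q)"
    unfolding E_def
    by (intro sw_add sw_mult sw_refl sw_P[OF m1] sw_P[OF m2]) auto
  show ?thesis by (rule sw_trans[OF s1 s2])
qed



lemma fin:
  assumes "0 \<le> K"
    and "\<And>n. 1 \<le> n \<Longrightarrow> Ef n = g1 n + g2 n \<and> Rf n = g1 n \<and> 0 \<le> g1 n \<and> 0 \<le> g2 n \<and> g2 n \<le> K * g1 n"
  shows "sw Ef Rf"
proof -
  have "sw (\<lambda>n. g1 n + g2 n) g1"
    by (rule sw_dom[OF assms(1)]) (use assms(2) in \<open>auto intro!: eventually_mono[OF eventually_ge_at_top[of 1]]\<close>)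
  then show ?thesis
    by (rule sw_cong) (use assms(2) in \<open>auto intro!: eventually_mono[OF eventually_ge_at_top[of 1]]\<close>)
qed

lemma lnb:
  fixes x e :: real
  assumes "0 < e" "1 \<le> x"
  shows "1 + ln x \<le> (1 + 1/e) * x powr e"
proof -
  have "ln x \<le> x powr e / e" by (rule ln_powr_bound[OF assms(2,1)])
  moreover have "1 \<le> x powr e" using assms by (intro ge_one_powr_ge_zero) auto
  ultimately show ?thesis by (simp add: field_simps)
qed

lemma pw: "real n powr a * real n powr b = real n powr (a + b)"
  by (simp add: powr_add)

lemma pmono: "1 \<le> n \<Longrightarrow> a \<le> b \<Longrightarrow> real n powr a \<le> real n powr b"
  by (intro powr_mono) auto

lemma case1:
  assumes "p > -1" "q > -1"
  shows "sw (E r p q) (S_rate r p q)"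
proof (rule fin[of 1 _ "\<lambda>n. real n powr (r*p+q+1)" "\<lambda>n. real n powr (r*p+q+1)"])
  fix n :: nat assume n: "1 \<le> n"
  have 1: "real n powr (r*p) * real n powr (q+1) = real n powr (r*p+q+1)" by (simp add: pw add.assoc)
  have 2: "real n powr ((r-1)*p+q) * real n powr (p+1) = real n powr (r*p+q+1)"
    by (simp add: pw algebra_simps)
  show "E r p q n = real n powr (r*p+q+1) + real n powr (r*p+q+1) \<and> S_rate r p q n = real n powr (r*p+q+1)
    \<and> 0 \<le> real n powr (r*p+q+1) \<and> 0 \<le> real n powr (r*p+q+1) \<and> real n powr (r*p+q+1) \<le> 1 * real n powr (r*p+q+1)"
    using assms 1 2 by (simp add: E_def G_def S_rate_def)
qed simp


lemma case2a:
  assumes "p > -1" "q = -1"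
  shows "sw (E r p q) (S_rate r p q)"
proof (rule fin[of 1 _ "\<lambda>n. real n powr (r*p) * (1 + ln (real n))" "\<lambda>n. real n powr (r*p)"])
  fix n :: nat assume n: "1 \<le> n"
  have 2: "real n powr ((r-1)*p + -1) * real n powr (p+1) = real n powr (r*p)"
    by (simp add: pw algebra_simps)
  have l: "0 \<le> ln (real n)" using n by simp
  have 3: "real n powr (r*p) \<le> 1 * (real n powr (r*p) * (1 + ln (real n)))"
    using l mult_left_mono[of 1 "1 + ln (real n)" "real n powr (r*p)"] by simp
  show "E r p q n = real n powr (r*p) * (1 + ln (real n)) + real n powr (r*p) \<and>
    S_rate r p q n = real n powr (r*p) * (1 + ln (real n)) \<and>
    0 \<le> real n powr (r*p) * (1 + ln (real n)) \<and> 0 \<le> real n powr (r*p) \<and>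
    real n powr (r*p) \<le> 1 * (real n powr (r*p) * (1 + ln (real n)))"
    using assms 2 3 l by (simp add: E_def G_def S_rate_def)
qed simp

lemma case2b:
  assumes "p = -1" "q > -1"
  shows "sw (E r p q) (S_rate r p q)"
proof (rule fin[of 1 _ "\<lambda>n. real n powr (q+1-r) * (1 + ln (real n))" "\<lambda>n. real n powr (q+1-r)"])
  fix n :: nat assume n: "1 \<le> n"
  have 1: "real n powr (r * -1) * real n powr (q+1) = real n powr (q+1-r)"
    by (simp add: pw algebra_simps)
  have 2: "real n powr ((r-1) * -1 + q) = real n powr (q+1-r)"
    by (simp add: algebra_simps)
  have l: "0 \<le> ln (real n)" using n by simp
  have 3: "real n powr (q+1-r) \<le> 1 * (real n powr (q+1-r) * (1 + ln (real n)))"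
    using l mult_left_mono[of 1 "1 + ln (real n)" "real n powr (q+1-r)"] by simp
  have 4: "r * -1 + q + 1 = q + 1 - r" by simp
  have 5: "real n powr (q - r + 1) = real n powr (q + 1 - r)"
  proof -
    have "q - r + 1 = q + 1 - r" by simp
    then show ?thesis by (simp only:)
  qed
  show "E r p q n = real n powr (q+1-r) * (1 + ln (real n)) + real n powr (q+1-r) \<and>
    S_rate r p q n = real n powr (q+1-r) * (1 + ln (real n)) \<and>
    0 \<le> real n powr (q+1-r) * (1 + ln (real n)) \<and> 0 \<le> real n powr (q+1-r) \<and>
    real n powr (q+1-r) \<le> 1 * (real n powr (q+1-r) * (1 + ln (real n)))"
    using assms 1 2 3 4 l 5 by (simp add: E_def G_def S_rate_def)
qed simp

lemma case2c:
  assumes "p = -1" "q = -1"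
  shows "sw (E r p q) (S_rate r p q)"
proof (rule fin[of 1 _ "\<lambda>n. real n powr (-r) * (1 + ln (real n))" "\<lambda>n. real n powr (-r) * (1 + ln (real n))"])
  fix n :: nat assume n: "1 \<le> n"
  have 2: "(r-1) * -1 + -1 = -r" "r * -1 = -r" "r * -1 + -1 + 1 = -r" by simp_all
  have l: "0 \<le> ln (real n)" using n by simp
  show "E r p q n = real n powr (-r) * (1 + ln (real n)) + real n powr (-r) * (1 + ln (real n)) \<and>
    S_rate r p q n = real n powr (-r) * (1 + ln (real n)) \<and>
    0 \<le> real n powr (-r) * (1 + ln (real n)) \<and> 0 \<le> real n powr (-r) * (1 + ln (real n)) \<and>
    real n powr (-r) * (1 + ln (real n)) \<le> 1 * (real n powr (-r) * (1 + ln (real n)))"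
    using assms 2 l by (simp add: E_def G_def S_rate_def)
qed simp

lemma case3a1:
  assumes "p < -1" "q < -1" "(r-1)*p+q \<le> r*p"
  shows "sw (E r p q) (S_rate r p q)"
proof (rule fin[of 1 _ "\<lambda>n. real n powr (r*p)" "\<lambda>n. real n powr ((r-1)*p+q)"])
  fix n :: nat assume n: "1 \<le> n"
  have "min p q < -1" using assms by simp
  show "E r p q n = real n powr (r*p) + real n powr ((r-1)*p+q) \<and>
    S_rate r p q n = real n powr (r*p) \<and>
    0 \<le> real n powr (r*p) \<and> 0 \<le> real n powr ((r-1)*p+q) \<and>
    real n powr ((r-1)*p+q) \<le> 1 * real n powr (r*p)"
    using assms pmono[OF n assms(3)] \<open>min p q < -1\<close> by (simp add: E_def G_def S_rate_def max_def)
qed simp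

lemma case3a2:
  assumes "p < -1" "q < -1" "r*p \<le> (r-1)*p+q"
  shows "sw (E r p q) (S_rate r p q)"
proof (rule fin[of 1 _ "\<lambda>n. real n powr ((r-1)*p+q)" "\<lambda>n. real n powr (r*p)"])
  fix n :: nat assume n: "1 \<le> n"
  have "min p q < -1" using assms by simp
  show "E r p q n = real n powr ((r-1)*p+q) + real n powr (r*p) \<and>
    S_rate r p q n = real n powr ((r-1)*p+q) \<and>
    0 \<le> real n powr ((r-1)*p+q) \<and> 0 \<le> real n powr (r*p) \<and>
    real n powr (r*p) \<le> 1 * real n powr ((r-1)*p+q)"
    using assms pmono[OF n assms(3)] \<open>min p q < -1\<close> by (simp add: E_def G_def S_rate_def max_def)
qed simp

lemma case3b:
  assumes "p > -1" "q < -1"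
  shows "sw (E r p q) (S_rate r p q)"
proof (rule fin[of 1 _ "\<lambda>n. real n powr (r*p)" "\<lambda>n. real n powr (r*p+q+1)"])
  fix n :: nat assume n: "1 \<le> n"
  have 2: "real n powr ((r-1)*p+q) * real n powr (p+1) = real n powr (r*p+q+1)"
    by (simp add: pw algebra_simps)
  have m: "max (r*p) ((r-1)*p+q) = r*p" using assms by (simp add: max_def algebra_simps)
  have 3: "real n powr (r*p+q+1) \<le> real n powr (r*p)" using assms by (intro pmono n) auto
  show "E r p q n = real n powr (r*p) + real n powr (r*p+q+1) \<and>
    S_rate r p q n = real n powr (r*p) \<and>
    0 \<le> real n powr (r*p) \<and> 0 \<le> real n powr (r*p+q+1) \<and>
    real n powr (r*p+q+1) \<le> 1 * real n powr (r*p)"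
    using assms 2 3 m by (simp add: E_def G_def S_rate_def)
qed simp

lemma case3c:
  assumes "p = -1" "q < -1"
  shows "sw (E r p q) (S_rate r p q)"
proof (rule fin[of "1 + 1/(-(q+1))" _ "\<lambda>n. real n powr (-r)" "\<lambda>n. real n powr (1-r+q) * (1 + ln (real n))"])
  fix n :: nat assume n: "1 \<le> n"
  define e where "e = -(q+1)"
  have e: "0 < e" using assms by (simp add: e_def)
  have b: "1 + ln (real n) \<le> (1 + 1/e) * real n powr e" using lnb[OF e] n by simp
  have "real n powr (1-r+q) * (1 + ln (real n)) \<le> real n powr (1-r+q) * ((1 + 1/e) * real n powr e)"
    using b by (intro mult_left_mono) auto
  also have "\<dots> = (1 + 1/e) * (real n powr (1-r+q) * real n powr e)" by (simp add: mult_ac)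
  also have "real n powr (1-r+q) * real n powr e = real n powr (-r)" by (simp add: pw e_def)
  finally have 3: "real n powr (1-r+q) * (1 + ln (real n)) \<le> (1 + 1/e) * real n powr (-r)" .
  have 2: "(r-1) * -1 + q = 1-r+q" "r * -1 = -r" by simp_all
  have m: "max (-r) (1-r+q) = -r" using assms by (simp add: max_def)
  have l: "0 \<le> ln (real n)" using n by simp
  show "E r p q n = real n powr (-r) + real n powr (1-r+q) * (1 + ln (real n)) \<and>
    S_rate r p q n = real n powr (-r) \<and>
    0 \<le> real n powr (-r) \<and> 0 \<le> real n powr (1-r+q) * (1 + ln (real n)) \<and>
    real n powr (1-r+q) * (1 + ln (real n)) \<le> (1 + 1/(-(q+1))) * real n powr (-r)"
    using assms 2 3 m l by (simp add: E_def G_def S_rate_def e_def)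
next
  show "0 \<le> 1 + 1/(-(q+1))" using assms by (simp add: field_simps)
qed

lemma case3d:
  assumes "p < -1" "q > -1"
  shows "sw (E r p q) (S_rate r p q)"
proof (rule fin[of 1 _ "\<lambda>n. real n powr ((r-1)*p+q)" "\<lambda>n. real n powr (r*p+q+1)"])
  fix n :: nat assume n: "1 \<le> n"
  have 1: "real n powr (r*p) * real n powr (q+1) = real n powr (r*p+q+1)" by (simp add: pw add.assoc)
  have m: "max (r*p) ((r-1)*p+q) = (r-1)*p+q" using assms by (simp add: max_def algebra_simps)
  have 3: "real n powr (r*p+q+1) \<le> real n powr ((r-1)*p+q)" using assms by (intro pmono n) (auto simp: algebra_simps)
  show "E r p q n = real n powr ((r-1)*p+q) + real n powr (r*p+q+1) \<and>
    S_rate r p q n = real n powr ((r-1)*p+q) \<and>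
    0 \<le> real n powr ((r-1)*p+q) \<and> 0 \<le> real n powr (r*p+q+1) \<and>
    real n powr (r*p+q+1) \<le> 1 * real n powr ((r-1)*p+q)"
    using assms 1 3 m by (simp add: E_def G_def S_rate_def)
qed simp

lemma case3e:
  assumes "p < -1" "q = -1"
  shows "sw (E r p q) (S_rate r p q)"
proof (rule fin[of "1 + 1/(-(p+1))" _ "\<lambda>n. real n powr ((r-1)*p-1)" "\<lambda>n. real n powr (r*p) * (1 + ln (real n))"])
  fix n :: nat assume n: "1 \<le> n"
  define e where "e = -(p+1)"
  have e: "0 < e" using assms by (simp add: e_def)
  have b: "1 + ln (real n) \<le> (1 + 1/e) * real n powr e" using lnb[OF e] n by simp
  have "real n powr (r*p) * (1 + ln (real n)) \<le> real n powr (r*p) * ((1 + 1/e) * real n powr e)"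
    using b by (intro mult_left_mono) auto
  also have "\<dots> = (1 + 1/e) * (real n powr (r*p) * real n powr e)" by (simp add: mult_ac)
  also have "real n powr (r*p) * real n powr e = real n powr ((r-1)*p-1)" by (simp add: pw e_def algebra_simps)
  finally have 3: "real n powr (r*p) * (1 + ln (real n)) \<le> (1 + 1/e) * real n powr ((r-1)*p-1)" .
  have 2: "(r-1)*p + -1 = (r-1)*p-1" by simp
  have m: "max (r*p) ((r-1)*p-1) = (r-1)*p-1" using assms by (simp add: max_def algebra_simps)
  have l: "0 \<le> ln (real n)" using n by simp
  show "E r p q n = real n powr ((r-1)*p-1) + real n powr (r*p) * (1 + ln (real n)) \<and>
    S_rate r p q n = real n powr ((r-1)*p-1) \<and>
    0 \<le> real n powr ((r-1)*p-1) \<and> 0 \<le> real n powr (r*p) * (1 + ln (real n)) \<and>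
    real n powr (r*p) * (1 + ln (real n)) \<le> (1 + 1/(-(p+1))) * real n powr ((r-1)*p-1)"
    using assms 2 3 m l by (simp add: E_def G_def S_rate_def e_def)
next
  show "0 \<le> 1 + 1/(-(p+1))" using assms by (simp add: field_simps)
qed

lemma sw_ER: "sw (E r p q) (S_rate r p q)"
proof -
  consider "p > -1" "q > -1" | "p > -1" "q = -1" | "p = -1" "q > -1" | "p = -1" "q = -1"
    | "p < -1" "q < -1" "(r-1)*p+q \<le> r*p" | "p < -1" "q < -1" "r*p \<le> (r-1)*p+q"
    | "p > -1" "q < -1" | "p = -1" "q < -1" | "p < -1" "q > -1" | "p < -1" "q = -1"
    by linarith
  then show ?thesis
  proof cases
    case 1 then show ?thesis by (rule case1)
  next
    case 2 then show ?thesis by (rule case2a)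
  next
    case 3 then show ?thesis by (rule case2b)
  next
    case 4 then show ?thesis by (rule case2c)
  next
    case 5 then show ?thesis by (rule case3a1)
  next
    case 6 then show ?thesis by (rule case3a2)
  next
    case 7 then show ?thesis by (rule case3b)
  next
    case 8 then show ?thesis by (rule case3c)
  next
    case 9 then show ?thesis by (rule case3d)
  next
    case 10 then show ?thesis by (rule case3e)
  qed
qed

theorem lemma5:
  fixes r p q :: real
  assumes "r > 0"
  shows "S_sum r p q \<in> \<Theta>(S_rate r p q)"
  by (rule sw_theta[OF sw_trans[OF sw_SE[OF assms] sw_ER]])

end
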